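(* Let $K$ and $K'$ be virtual knot diagrams such that $K'$ can be obtained from $K$ by a finite sequence of generalized Reidemeister moves and crossing changes (switching the over/under information at real crossings). Then $$W_K(t)-W_K(t^{-1})=W_{K'}(t)-W_{K'}(t^{-1}).$$ Consequently $\mathfrak{F}_{F(K)}(t):=W_K(t)-W_K(t^{-1})$ is a well-defined invariant of the flat virtual knot $F(K)$.
   Context: Virtual knot diagrams are planar immersed circles whose double points are real crossings (with over/under information) or virtual crossings; generalized Reidemeister moves are the three classical Reidemeister moves $\Omega_1,\Omega_2,\Omega_3$, the three purely virtual moves, and the mixed move $\Omega_3^v$ in which a strand containing only virtual crossings passes over a real crossing. Each real crossing $c$ has a writhe $w(c)\in\{\pm1\}$ (usual sign); $w(K)=\sum_c w(c)$. Gauss diagram and chord index: the Gauss diagram $G(K)$ is a circle (the preimage of the knot, oriented counterclockwise) with, for each real crossing $c$, a chord directed from the preimage of the overcrossing to the preimage of the undercrossing and carrying the sign $w(c)$. Say a chord $d$ crosses a chord $c$ if the endpoints of $d$ separate the endpoints of $c$ on the circle; viewing $c$ as an arrow in the disk bounded by the circle, $d$ crosses $c$ from left to right if the tail of $d$ is on the left of $c$ and its head on the right, and from right to left otherwise. Let $r_+(c), r_-(c)$ be the numbers of positive, resp. negative, chords crossing $c$ from left to right, and $l_+(c), l_-(c)$ those crossing from right to left. The index of $c$ is $\mathrm{Ind}(c)=r_+(c)-r_-(c)-l_+(c)+l_-(c)$. Writhe polynomial: $a_n(K)=\sum_{\mathrm{Ind}(c)=n}w(c)$ for $n\neq0$,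 and $W_K(t)=\sum_{n\neq 0}a_n(K)t^n$; it is known to be a virtual knot invariant. Flat virtual knots: flat virtual knot diagrams are obtained by replacing real crossings by flat (unsigned, no over/under) crossings, modulo the flat versions of the generalized Reidemeister moves; $F(K)$ denotes the flat virtual knot obtained from $K$ by flattening all real crossings. *)

theory Defs
  imports Complex_Main
begin

text \<open>A virtual knot diagram, up to the purely virtual and mixed moves, is
  encoded by its Gauss diagram.  A Gauss diagram is a Gauss word: the list of
  passages through real crossings in the order met while traversing the knot
  (= counterclockwise order on the circle of the Gauss diagram).  A letter
  (c, True) is the over-passage of crossing c (tail of the chord), (c, False)
  the under-passage (head of the chord).  The sign function gives w(c).\<close>

type_synonym letter = "nat \<times> bool"
type_synonym gdiag = "letter list \<times> (nat \<Rightarrow> int)"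

definition labels :: "letter list \<Rightarrow> nat set" where
  "labels w = fst ` set w"

definition gauss_wf :: "gdiag \<Rightarrow> bool" where
  "gauss_wf K = (case K of (w, s) \<Rightarrow>
     distinct w \<and>
     (\<forall>c \<in> labels w. (c, True) \<in> set w \<and> (c, False) \<in> set w \<and> (s c = 1 \<or> s c = -1)))"

definition lpos :: "letter list \<Rightarrow> letter \<Rightarrow> nat" where
  "lpos w x = (LEAST i. i < length w \<and> w ! i = x)"

definition tailpos :: "letter list \<Rightarrow> nat \<Rightarrow> nat" where
  "tailpos w c = lpos w (c, True)"

definition headpos :: "letter list \<Rightarrow> nat \<Rightarrow> nat" where
  "headpos w c = lpos w (c, False)"

text \<open>Position p lies on the right of chord c: it lies on the arc running
  counterclockwise from the tail of c to its head.\<close>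
definition on_right :: "letter list \<Rightarrow> nat \<Rightarrow> nat \<Rightarrow> bool" where
  "on_right w c p = (let t = tailpos w c; h = headpos w c in
     if t < h then t < p \<and> p < h else t < p \<or> p < h)"

definition crosses_LR :: "letter list \<Rightarrow> nat \<Rightarrow> nat \<Rightarrow> bool" where
  "crosses_LR w c d = (d \<noteq> c \<and> \<not> on_right w c (tailpos w d) \<and> on_right w c (headpos w d))"

definition crosses_RL :: "letter list \<Rightarrow> nat \<Rightarrow> nat \<Rightarrow> bool" where
  "crosses_RL w c d = (d \<noteq> c \<and> on_right w c (tailpos w d) \<and> \<not> on_right w c (headpos w d))"

text \<open>Ind(c) = r+(c) - r-(c) - l+(c) + l-(c).\<close>
definition chord_index :: "gdiag \<Rightarrow> nat \<Rightarrow> int" where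
  "chord_index K c = (case K of (w, s) \<Rightarrow>
     (\<Sum>d\<in>labels w. (if crosses_LR w c d then s d else 0)
                    - (if crosses_RL w c d then s d else 0)))"

text \<open>Writhe polynomial W_K(t) = sum over n \<noteq> 0 of a_n(K) t^n, as a Laurent
  polynomial function of a nonzero real t.\<close>
definition writhe_poly :: "gdiag \<Rightarrow> real \<Rightarrow> real" where
  "writhe_poly K t = (case K of (w, s) \<Rightarrow>
     (\<Sum>c\<in>labels w. if chord_index K c \<noteq> 0
                     then real_of_int (s c) * t powi chord_index K c else 0))"

definition frakF :: "gdiag \<Rightarrow> real \<Rightarrow> real" where
  "frakF K t = writhe_poly K t - writhe_poly K (inverse t)"

definition rot_move :: "gdiag \<Rightarrow> gdiag \<Rightarrow> bool" where
  "rot_move K K' = (\<exists>w s n. K = (w, s) \<and> K' = (rotate n w, s))"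

text \<open>Renaming of crossings (isomorphic Gauss diagrams; values of the sign
  function away from the chords are irrelevant).\<close>
definition iso_move :: "gdiag \<Rightarrow> gdiag \<Rightarrow> bool" where
  "iso_move K K' = (\<exists>w s w' s' f. K = (w, s) \<and> K' = (w', s') \<and> inj_on f (labels w) \<and>
      w' = map (\<lambda>(c, ov). (f c, ov)) w \<and> (\<forall>c\<in>labels w. s' (f c) = s c))"

definition sg :: "bool \<Rightarrow> int" where
  "sg b = (if b then 1 else -1)"

definition R1_move :: "gdiag \<Rightarrow> gdiag \<Rightarrow> bool" where
  "R1_move K K' = (\<exists>u v s c ov e. K = (u @ v, s) \<and> c \<notin> labels (u @ v) \<and> (e = 1 \<or> e = -1) \<and>
      K' = (u @ [(c, ov), (c, \<not> ov)] @ v, s(c := e)))"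

definition R2_move :: "gdiag \<Rightarrow> gdiag \<Rightarrow> bool" where
  "R2_move K K' = (\<exists>u v x s c d ov e. K = (u @ v @ x, s) \<and>
      c \<notin> labels (u @ v @ x) \<and> d \<notin> labels (u @ v @ x) \<and> c \<noteq> d \<and> (e = 1 \<or> e = -1) \<and>
      (K' = (u @ [(c, ov), (d, ov)] @ v @ [(c, \<not> ov), (d, \<not> ov)] @ x, s(c := e, d := - e)) \<or>
       K' = (u @ [(c, ov), (d, ov)] @ v @ [(d, \<not> ov), (c, \<not> ov)] @ x, s(c := e, d := - e))))"

text \<open>Three arcs (lines 1, 2, 3 in word order) each
  containing two adjacent endpoints; chord X joins lines 1,2, chord Y lines 2,3,
  chord Z lines 3,1.  eta_i records the order in which line i meets the other
  two lines.  The move is realisable iff the heights are not cyclic and the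
  sign condition below (derived from the planar triangle) holds.\<close>
definition R3_cond :: "(nat \<Rightarrow> int) \<Rightarrow> letter \<Rightarrow> letter \<Rightarrow> letter \<Rightarrow> letter \<Rightarrow> letter \<Rightarrow> letter \<Rightarrow> bool" where
  "R3_cond s a b c d e f = (\<exists>X Y Z. distinct [X, Y, Z] \<and>
      {fst a, fst b} = {X, Z} \<and> {fst c, fst d} = {X, Y} \<and> {fst e, fst f} = {Y, Z} \<and>
      (let eta1 = (fst a = X); eta2 = (fst c = Y); eta3 = (fst e = Z);
           rX = s X * sg (eta1 = eta2) * sg ((X, True) \<in> {c, d});
           rY = s Y * sg (eta2 = eta3) * sg ((Y, True) \<in> {e, f});
           rZ = s Z * sg (eta3 = eta1) * sg ((Z, True) \<in> {a, b})
       in rX = rY \<and> rY = rZ \<and>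
          \<not> ((X, True) \<in> {c, d} \<and> (Y, True) \<in> {e, f} \<and> (Z, True) \<in> {a, b}) \<and>
          \<not> ((X, True) \<in> {a, b} \<and> (Y, True) \<in> {c, d} \<and> (Z, True) \<in> {e, f})))"

definition R3_move :: "gdiag \<Rightarrow> gdiag \<Rightarrow> bool" where
  "R3_move K K' = (\<exists>u v x y s a b c d e f. R3_cond s a b c d e f \<and>
      K = (u @ [a, b] @ v @ [c, d] @ x @ [e, f] @ y, s) \<and>
      K' = (u @ [b, a] @ v @ [d, c] @ x @ [f, e] @ y, s))"

definition cc_move :: "gdiag \<Rightarrow> gdiag \<Rightarrow> bool" where
  "cc_move K K' = (\<exists>w s c. K = (w, s) \<and> c \<in> labels w \<and>
      K' = (map (\<lambda>(d, ov). if d = c then (d, \<not> ov) else (d, ov)) w, s(c := - s c)))"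

definition gen_step :: "gdiag \<Rightarrow> gdiag \<Rightarrow> bool" where
  "gen_step K K' = (rot_move K K' \<or> iso_move K K' \<or> R1_move K K' \<or> R2_move K K' \<or>
                    R3_move K K' \<or> cc_move K K')"

definition moves_cc_equiv :: "gdiag \<Rightarrow> gdiag \<Rightarrow> bool" where
  "moves_cc_equiv = (\<lambda>K K'. gen_step K K' \<or> gen_step K' K)\<^sup>*\<^sup>*"

text \<open>Flat Gauss diagram (Turaev's arrow diagram of a virtual string): unsigned
  but directed chords.  Flattening a real crossing c keeps the geometric arrow:
  it agrees with the over-to-under direction when w(c) = +1 and is reversed when
  w(c) = -1.  A letter (c, True) is the tail of the flat chord c.\<close>
type_synonym fword = "(nat \<times> bool) list"

definition flatten :: "gdiag \<Rightarrow> fword" where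
  "flatten K = (case K of (w, s) \<Rightarrow> map (\<lambda>(c, ov). (c, ov = (s c = 1))) w)"

definition frot_move :: "fword \<Rightarrow> fword \<Rightarrow> bool" where
  "frot_move w w' = (\<exists>n. w' = rotate n w)"

definition fiso_move :: "fword \<Rightarrow> fword \<Rightarrow> bool" where
  "fiso_move w w' = (\<exists>f. inj_on f (labels w) \<and> w' = map (\<lambda>(c, b). (f c, b)) w)"

definition F1_move :: "fword \<Rightarrow> fword \<Rightarrow> bool" where
  "F1_move w w' = (\<exists>u v c b. w = u @ v \<and> c \<notin> labels w \<and> w' = u @ [(c, b), (c, \<not> b)] @ v)"

definition F2_move :: "fword \<Rightarrow> fword \<Rightarrow> bool" where
  "F2_move w w' = (\<exists>u v x c d b. w = u @ v @ x \<and> c \<notin> labels w \<and> d \<notin> labels w \<and> c \<noteq> d \<and>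
      (w' = u @ [(c, b), (d, \<not> b)] @ v @ [(c, \<not> b), (d, b)] @ x \<or>
       w' = u @ [(c, b), (d, \<not> b)] @ v @ [(d, b), (c, \<not> b)] @ x))"

text \<open>Flat third move: same triangle condition as for R3, where the signed
  over/under data is replaced by the flat arrow direction.\<close>
definition F3_cond :: "letter \<Rightarrow> letter \<Rightarrow> letter \<Rightarrow> letter \<Rightarrow> letter \<Rightarrow> letter \<Rightarrow> bool" where
  "F3_cond a b c d e f = (\<exists>X Y Z. distinct [X, Y, Z] \<and>
      {fst a, fst b} = {X, Z} \<and> {fst c, fst d} = {X, Y} \<and> {fst e, fst f} = {Y, Z} \<and>
      (let eta1 = (fst a = X); eta2 = (fst c = Y); eta3 = (fst e = Z);
           rX = sg (eta1 = eta2) * sg ((X, True) \<in> {c, d});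
           rY = sg (eta2 = eta3) * sg ((Y, True) \<in> {e, f});
           rZ = sg (eta3 = eta1) * sg ((Z, True) \<in> {a, b})
       in rX = rY \<and> rY = rZ))"

definition F3_move :: "fword \<Rightarrow> fword \<Rightarrow> bool" where
  "F3_move w w' = (\<exists>u v x y a b c d e f. F3_cond a b c d e f \<and>
      w = u @ [a, b] @ v @ [c, d] @ x @ [e, f] @ y \<and>
      w' = u @ [b, a] @ v @ [d, c] @ x @ [f, e] @ y)"

definition flat_step :: "fword \<Rightarrow> fword \<Rightarrow> bool" where
  "flat_step w w' = (frot_move w w' \<or> fiso_move w w' \<or> F1_move w w' \<or> F2_move w w' \<or> F3_move w w')"

definition flat_equiv :: "fword \<Rightarrow> fword \<Rightarrow> bool" where
  "flat_equiv = (\<lambda>w w'. flat_step w w' \<or> flat_step w' w)\<^sup>*\<^sup>*"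

end

theory Submission
  imports Defs
begin


lemma lpos_nth: "distinct w \<Longrightarrow> i < length w \<Longrightarrow> lpos w (w!i) = i"
  unfolding lpos_def
  by (rule Least_equality) (auto simp: nth_eq_iff_index_eq)

lemma lpos_props: "x \<in> set w \<Longrightarrow> lpos w x < length w \<and> w ! lpos w x = x"
  unfolding lpos_def
  by (rule LeastI_ex) (auto simp: in_set_conv_nth)

lemma lpos_inj: "x \<in> set w \<Longrightarrow> y \<in> set w \<Longrightarrow> lpos w x = lpos w y \<Longrightarrow> x = y"
  by (metis lpos_props)

lemma lpos_append: "distinct (u @ v) \<Longrightarrow> x \<in> set (u @ v) \<Longrightarrow>
   lpos (u @ v) x = (if x \<in> set u then lpos u x else length u + lpos v x)"
proof (cases "x \<in> set u")
  case True
  assume d: "distinct (u @ v)"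
  have "(u @ v) ! lpos u x = x" "lpos u x < length (u @ v)" using lpos_props[OF True] by (auto simp: nth_append)
  then show ?thesis using lpos_nth[OF d, of "lpos u x"] True by simp
next
  case False
  assume d: "distinct (u @ v)" and x: "x \<in> set (u @ v)"
  then have xv: "x \<in> set v" using False by auto
  have "(u @ v) ! (length u + lpos v x) = x" "length u + lpos v x < length (u @ v)"
    using lpos_props[OF xv] by (auto simp: nth_append)
  then show ?thesis using lpos_nth[OF d, of "length u + lpos v x"] False by simp
qed

lemma lpos_Cons: "distinct (a # w) \<Longrightarrow> x \<in> set (a # w) \<Longrightarrow>
   lpos (a # w) x = (if x = a then 0 else Suc (lpos w x))"
  using lpos_append[of "[a]" w x] by (auto simp: lpos_nth[of "[a]" 0, simplified])

definition fwf :: "letter list \<Rightarrow> bool" where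
  "fwf w = (distinct w \<and> (\<forall>c\<in>labels w. (c, True) \<in> set w \<and> (c, False) \<in> set w))"

definition cycp :: "nat \<Rightarrow> nat \<Rightarrow> nat \<Rightarrow> bool" where
  "cycp i j k = ((i < j \<and> j < k) \<or> (j < k \<and> k < i) \<or> (k < i \<and> i < j))"

definition cyc :: "letter list \<Rightarrow> letter \<Rightarrow> letter \<Rightarrow> letter \<Rightarrow> bool" where
  "cyc w x y z = cycp (lpos w x) (lpos w y) (lpos w z)"

definition vs :: "(nat \<Rightarrow> int) \<Rightarrow> letter \<Rightarrow> int" where
  "vs s y = s (fst y) * (if snd y then -1 else 1)"

definition sidx :: "(nat \<Rightarrow> int) \<Rightarrow> letter list \<Rightarrow> nat \<Rightarrow> int" where
  "sidx s w c = (\<Sum>y\<in>set w. if cyc w (c, True) y (c, False) then vs s y else 0)"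

definition Phi :: "letter list \<Rightarrow> real \<Rightarrow> real" where
  "Phi w t = (\<Sum>c\<in>labels w. t powi (sidx (\<lambda>_. 1) w c) - t powi (- sidx (\<lambda>_. 1) w c))"

lemma fwf_set: "fwf w \<Longrightarrow> set w = labels w \<times> UNIV"
proof (rule set_eqI)
  fix x :: letter assume "fwf w"
  then show "x \<in> set w \<longleftrightarrow> x \<in> labels w \<times> UNIV"
    unfolding fwf_def labels_def
    by (cases x; cases "snd x") (auto simp: image_iff intro: rev_bexI)
qed

lemma finite_labels[simp]: "finite (labels w)"
  unfolding labels_def by simp

lemma sum_set_fwf: "fwf w \<Longrightarrow> (\<Sum>y\<in>set w. F y) = (\<Sum>d\<in>labels w. F (d, True) + F (d, False))"
proof -
  assume "fwf w"
  then have "(\<Sum>y\<in>set w. F y) = (\<Sum>d\<in>labels w. \<Sum>b\<in>UNIV. F (d, b))"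
    by (simp add: fwf_set sum.cartesian_product)
  then show ?thesis by (simp add: UNIV_bool add.commute)
qed

lemma total_zero: "fwf w \<Longrightarrow> (\<Sum>y\<in>set w. vs s y) = 0"
  by (simp add: sum_set_fwf vs_def)

lemma chord_index_sidx:
  assumes "fwf w" "c \<in> labels w"
  shows "chord_index (w, s) c = sidx s w c"
proof -
  have ne: "lpos w (c, True) \<noteq> lpos w (c, False)"
    using assms lpos_inj[of "(c,True)" w "(c,False)"] unfolding fwf_def by auto
  show ?thesis
    unfolding chord_index_def sidx_def sum_set_fwf[OF assms(1)]
  proof (simp, rule sum.cong[OF refl])
    fix d assume "d \<in> labels w"
    show "(if crosses_LR w c d then s d else 0) - (if crosses_RL w c d then s d else 0) =
      (if cyc w (c, True) (d, True) (c, False) then vs s (d, True) else 0) +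
      (if cyc w (c, True) (d, False) (c, False) then vs s (d, False) else 0)"
      using ne unfolding crosses_LR_def crosses_RL_def on_right_def tailpos_def headpos_def cyc_def cycp_def vs_def Let_def
      by auto
  qed
qed

lemma cyc_triv[simp]: "\<not> cyc w x x z" "\<not> cyc w x z z"
  unfolding cyc_def cycp_def by auto

lemma cycp_rev: "T \<noteq> H \<Longrightarrow> cycp H Y T \<longleftrightarrow> \<not> cycp T Y H \<and> Y \<noteq> T \<and> Y \<noteq> H"
  unfolding cycp_def by arith

definition fl :: "(nat \<Rightarrow> int) \<Rightarrow> letter \<Rightarrow> letter" where
  "fl s y = (fst y, snd y = (s (fst y) = 1))"

lemma inj_fl: "inj (fl s)"
  unfolding inj_def fl_def by auto

lemma flatten_eq: "flatten (w, s) = map (fl s) w"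
  unfolding flatten_def fl_def by (simp add: case_prod_beta)

lemma lpos_map_inj: "inj_on g (set w) \<Longrightarrow> y \<in> set w \<Longrightarrow> lpos (map g w) (g y) = lpos w y"
proof -
  assume a: "inj_on g (set w)" "y \<in> set w"
  have "(i < length (map g w) \<and> map g w ! i = g y) = (i < length w \<and> w ! i = y)" for i
    using inj_on_eq_iff[OF a(1) nth_mem a(2), of i] by auto
  then show ?thesis unfolding lpos_def by simp
qed

lemma labels_map_fl[simp]: "labels (map (fl s) w) = labels w"
  unfolding labels_def fl_def by (simp add: image_image)

lemma gauss_wf_iff: "gauss_wf (w, s) \<longleftrightarrow> fwf w \<and> (\<forall>c\<in>labels w. s c = 1 \<or> s c = -1)"
  unfolding gauss_wf_def fwf_def by auto


lemma fwf_map_fl: "fwf (map (fl s) w) \<longleftrightarrow> fwf w"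
proof -
  have i: "inj_on (fl s) A" for A using inj_on_subset[OF inj_fl subset_UNIV] .
  have m: "(c, b) \<in> fl s ` set w \<longleftrightarrow> (c, b = (s c = 1)) \<in> set w" for c b
  proof
    assume "(c, b) \<in> fl s ` set w"
    then obtain y where y: "y \<in> set w" "(c, b) = fl s y" by blast
    obtain c' ov where yy: "y = (c', ov)" by (cases y)
    have "c = c'" "b = (ov = (s c' = 1))" using y(2) unfolding yy fl_def by simp_all
    then have "(c, b = (s c = 1)) = y" unfolding yy by auto
    then show "(c, b = (s c = 1)) \<in> set w" using y(1) by simp
  next
    assume "(c, b = (s c = 1)) \<in> set w"
    moreover have "fl s (c, b = (s c = 1)) = (c, b)" by (cases b) (simp_all add: fl_def)
    ultimately show "(c, b) \<in> fl s ` set w" by (metis image_eqI)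
  qed
  have p: "((c,True) \<in> set (map (fl s) w) \<and> (c,False) \<in> set (map (fl s) w)) \<longleftrightarrow>
     ((c,True) \<in> set w \<and> (c,False) \<in> set w)" for c
    unfolding set_map m by (cases "s c = 1") auto
  have d: "distinct (map (fl s) w) = distinct w" using i by (simp add: distinct_map)
  show ?thesis unfolding fwf_def labels_map_fl d using p by blast
qed


lemma sidx_flatten:
  assumes w: "fwf w" and sg: "\<forall>c\<in>labels w. s c = 1 \<or> s c = -1" and c: "c \<in> labels w"
  shows "sidx (\<lambda>_. 1) (map (fl s) w) c = s c * sidx s w c"
proof -
  have inj: "inj_on (fl s) (set w)" using inj_on_subset[OF inj_fl subset_UNIV] .
  have vsfl: "vs (\<lambda>_. 1) (fl s y) = vs s y" if "y \<in> set w" for y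
  proof -
    have "fst y \<in> labels w" using that unfolding labels_def by auto
    then show ?thesis using sg unfolding vs_def fl_def by auto
  qed
  have cycfl: "cyc (map (fl s) w) (fl s x) (fl s y) (fl s z) = cyc w x y z"
    if "x \<in> set w" "y \<in> set w" "z \<in> set w" for x y z
    unfolding cyc_def using lpos_map_inj[OF inj] that by simp
  have cT: "(c, True) \<in> set w" and cF: "(c, False) \<in> set w" using w c unfolding fwf_def by auto
  have "sidx (\<lambda>_. 1) (map (fl s) w) c =
     (\<Sum>y\<in>set w. if cyc (map (fl s) w) (c, True) (fl s y) (c, False) then vs s y else 0)"
    unfolding sidx_def by (simp add: sum.reindex[OF inj] vsfl cong: if_cong)
  also have "\<dots> = s c * sidx s w c"
  proof (cases "s c = 1")
    case True
    then have eqs: "fl s (c, True) = (c, True)" "fl s (c, False) = (c, False)" unfolding fl_def by auto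
    have cc: "cyc (map (fl s) w) (c, True) (fl s y) (c, False) = cyc w (c,True) y (c,False)" if "y \<in> set w" for y
      using cycfl[OF cT that cF] unfolding eqs .
    show ?thesis unfolding sidx_def True
      by (simp, rule sum.cong[OF refl], simp add: cc)
  next
    case False
    then have sc: "s c = -1" using sg c by auto
    then have e: "fl s (c, False) = (c, True)" "fl s (c, True) = (c, False)" unfolding fl_def by auto
    have ne: "lpos w (c, True) \<noteq> lpos w (c, False)" using lpos_inj[OF cT cF] by auto
    have pw: "(if cyc (map (fl s) w) (c, True) (fl s y) (c, False) then vs s y else 0) =
       vs s y - (if cyc w (c, True) y (c, False) then vs s y else 0)
         - (if y = (c, True) then vs s y else 0) - (if y = (c, False) then vs s y else 0)"
      if y: "y \<in> set w" for y
    proof -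
      have "cyc (map (fl s) w) (c, True) (fl s y) (c, False) = cyc w (c, False) y (c, True)"
        using cycfl[OF cF y cT] unfolding e .
      moreover have "y = (c, True) \<longleftrightarrow> lpos w y = lpos w (c, True)" using lpos_inj[OF y cT] by auto
      moreover have "y = (c, False) \<longleftrightarrow> lpos w y = lpos w (c, False)" using lpos_inj[OF y cF] by auto
      ultimately have "cyc (map (fl s) w) (c, True) (fl s y) (c, False) =
          (\<not> cyc w (c, True) y (c, False) \<and> y \<noteq> (c, True) \<and> y \<noteq> (c, False))"
        unfolding cyc_def using cycp_rev[OF ne] by simp
      then show ?thesis by auto
    qed
    have "(\<Sum>y\<in>set w. if cyc (map (fl s) w) (c, True) (fl s y) (c, False) then vs s y else 0)
      = (\<Sum>y\<in>set w. vs s y) - sidx s w c - vs s (c, True) - vs s (c, False)"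
      unfolding sidx_def by (simp add: pw sum_subtractf cT cF)
    also have "\<dots> = - sidx s w c" using total_zero[OF w] by (simp add: vs_def)
    finally show ?thesis using sc by simp
  qed
  finally show ?thesis .
qed

lemma frakF_Phi:
  assumes "gauss_wf (w, s)" "t \<noteq> 0"
  shows "frakF (w, s) t = Phi (flatten (w, s)) t"
proof -
  have w: "fwf w" and sg: "\<forall>c\<in>labels w. s c = 1 \<or> s c = -1" using assms gauss_wf_iff by auto
  have "frakF (w, s) t = (\<Sum>c\<in>labels w. (if chord_index (w, s) c \<noteq> 0 then real_of_int (s c) * t powi chord_index (w, s) c else 0)
       - (if chord_index (w, s) c \<noteq> 0 then real_of_int (s c) * (inverse t) powi chord_index (w, s) c else 0))"
    unfolding frakF_def writhe_poly_def by (simp add: sum_subtractf)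
  also have "\<dots> = Phi (flatten (w, s)) t"
    unfolding Phi_def flatten_eq labels_map_fl
  proof (rule sum.cong[OF refl])
    fix c assume c: "c \<in> labels w"
    show "(if chord_index (w, s) c \<noteq> 0 then real_of_int (s c) * t powi chord_index (w, s) c else 0)
       - (if chord_index (w, s) c \<noteq> 0 then real_of_int (s c) * (inverse t) powi chord_index (w, s) c else 0) =
       t powi sidx (\<lambda>_. 1) (map (fl s) w) c - t powi - sidx (\<lambda>_. 1) (map (fl s) w) c"
      unfolding sidx_flatten[OF w sg c] chord_index_sidx[OF w c]
      using sg c by (cases "s c = 1") (auto simp: power_int_inverse power_int_minus)
  qed
  finally show ?thesis .
qed



lemma sidx_list: "distinct w \<Longrightarrow>
  sidx s w c = sum_list (map (\<lambda>y. if cyc w (c, True) y (c, False) then vs s y else 0) w)"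
  unfolding sidx_def by (rule sum.distinct_set_conv_list)

lemma total_zero_list: "fwf w \<Longrightarrow> sum_list (map (vs s) w) = 0"
  using total_zero[of w s] sum.distinct_set_conv_list[of w "vs s"] unfolding fwf_def by simp

lemma lpos_decomp:
  assumes d: "distinct (A @ t # B @ h # C)"
  shows "\<And>y. y \<in> set A \<Longrightarrow> lpos (A @ t # B @ h # C) y < length A"
    and "lpos (A @ t # B @ h # C) t = length A"
    and "\<And>y. y \<in> set B \<Longrightarrow> length A < lpos (A @ t # B @ h # C) y \<and> lpos (A @ t # B @ h # C) y < length A + 1 + length B"
    and "lpos (A @ t # B @ h # C) h = length A + 1 + length B"
    and "\<And>y. y \<in> set C \<Longrightarrow> length A + 1 + length B < lpos (A @ t # B @ h # C) y"
proof -
  have d2: "distinct (t # B @ h # C)" and d3: "distinct (B @ h # C)" and d4: "distinct (h # C)"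
    using d by auto
  have e1: "lpos (A @ t # B @ h # C) y = (if y \<in> set A then lpos A y else length A + lpos (t # B @ h # C) y)"
    if "y \<in> set (A @ t # B @ h # C)" for y using lpos_append[of A "t # B @ h # C" y] d that by simp
  have e2: "lpos (t # B @ h # C) y = (if y = t then 0 else Suc (lpos (B @ h # C) y))"
    if "y \<in> set (t # B @ h # C)" for y using lpos_Cons[OF d2 that] .
  have e3: "lpos (B @ h # C) y = (if y \<in> set B then lpos B y else length B + lpos (h # C) y)"
    if "y \<in> set (B @ h # C)" for y using lpos_append[OF d3 that] .
  have e4: "lpos (h # C) y = (if y = h then 0 else Suc (lpos C y))"
    if "y \<in> set (h # C)" for y using lpos_Cons[OF d4 that] .
  show "\<And>y. y \<in> set A \<Longrightarrow> lpos (A @ t # B @ h # C) y < length A"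
    using e1 lpos_props by auto
  show "lpos (A @ t # B @ h # C) t = length A"
    using e1 e2 d by auto
  show "\<And>y. y \<in> set B \<Longrightarrow> length A < lpos (A @ t # B @ h # C) y \<and> lpos (A @ t # B @ h # C) y < length A + 1 + length B"
  proof -
    fix y assume y: "y \<in> set B"
    then have "y \<notin> set A" "y \<noteq> t" using d by auto
    then show "length A < lpos (A @ t # B @ h # C) y \<and> lpos (A @ t # B @ h # C) y < length A + 1 + length B"
      using e1[of y] e2[of y] e3[of y] y lpos_props[OF y] by auto
  qed
  show "lpos (A @ t # B @ h # C) h = length A + 1 + length B"
  proof -
    have "h \<notin> set A" "h \<noteq> t" "h \<notin> set B" using d by auto
    then show ?thesis using e1[of h] e2[of h] e3[of h] e4[of h] by auto
  qed
  show "\<And>y. y \<in> set C \<Longrightarrow> length A + 1 + length B < lpos (A @ t # B @ h # C) y"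
  proof -
    fix y assume y: "y \<in> set C"
    then have "y \<notin> set A" "y \<noteq> t" "y \<notin> set B" "y \<noteq> h" using d by auto
    then show "length A + 1 + length B < lpos (A @ t # B @ h # C) y"
      using e1[of y] e2[of y] e3[of y] e4[of y] y by auto
  qed
qed

lemma sidx_split1:
  assumes d: "distinct (A @ (c, True) # B @ (c, False) # C)"
  shows "sidx s (A @ (c, True) # B @ (c, False) # C) c = sum_list (map (vs s) B)"
proof -
  let ?w = "A @ (c, True) # B @ (c, False) # C"
  let ?F = "\<lambda>y. if cyc ?w (c, True) y (c, False) then vs s y else 0"
  note P = lpos_decomp[OF d]
  have m1: "map ?F A = map (\<lambda>_. 0) A" proof (rule map_cong[OF refl])
    fix y assume y: "y \<in> set A"
    show "?F y = 0" using P(1)[OF y] P(2) P(4) by (simp add: cyc_def cycp_def)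
  qed
  have m2: "map ?F B = map (vs s) B" proof (rule map_cong[OF refl])
    fix y assume y: "y \<in> set B"
    show "?F y = vs s y" using P(3)[OF y] P(2) P(4) by (simp add: cyc_def cycp_def)
  qed
  have m3: "map ?F C = map (\<lambda>_. 0) C" proof (rule map_cong[OF refl])
    fix y assume y: "y \<in> set C"
    show "?F y = 0" using P(5)[OF y] P(2) P(4) by (simp add: cyc_def cycp_def)
  qed
  have "sidx s ?w c = sum_list (map ?F A) + ?F (c, True) + sum_list (map ?F B) + ?F (c, False) + sum_list (map ?F C)"
    unfolding sidx_list[OF d] by simp
  also have "\<dots> = sum_list (map (vs s) B)" unfolding m1 m2 m3 by simp
  finally show ?thesis .
qed

lemma sidx_split2:
  assumes f: "fwf (A @ (c, False) # B @ (c, True) # C)"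
  shows "sidx s (A @ (c, False) # B @ (c, True) # C) c = - sum_list (map (vs s) B)"
proof -
  let ?w = "A @ (c, False) # B @ (c, True) # C"
  let ?F = "\<lambda>y. if cyc ?w (c, True) y (c, False) then vs s y else 0"
  have d: "distinct ?w" using f unfolding fwf_def by auto
  note P = lpos_decomp[OF d]
  have m1: "map ?F A = map (vs s) A" proof (rule map_cong[OF refl])
    fix y assume y: "y \<in> set A"
    show "?F y = vs s y" using P(1)[OF y] P(2) P(4) by (simp add: cyc_def cycp_def)
  qed
  have m2: "map ?F B = map (\<lambda>_. 0) B" proof (rule map_cong[OF refl])
    fix y assume y: "y \<in> set B"
    show "?F y = 0" using P(3)[OF y] P(2) P(4) by (simp add: cyc_def cycp_def)
  qed
  have m3: "map ?F C = map (vs s) C" proof (rule map_cong[OF refl])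
    fix y assume y: "y \<in> set C"
    show "?F y = vs s y" using P(5)[OF y] P(2) P(4) by (simp add: cyc_def cycp_def)
  qed
  have "sidx s ?w c = sum_list (map ?F A) + ?F (c, False) + sum_list (map ?F B) + ?F (c, True) + sum_list (map ?F C)"
    unfolding sidx_list[OF d] by simp
  also have "\<dots> = sum_list (map (vs s) A) + sum_list (map (vs s) C)" unfolding m1 m2 m3 by simp
  also have "\<dots> = - sum_list (map (vs s) B)" using total_zero_list[OF f, of s] by (simp add: vs_def)
  finally show ?thesis .
qed

lemma lpos_mid:
  assumes d: "distinct (u @ x1 # x2 # v)"
  shows "\<And>y. y \<in> set u \<Longrightarrow> lpos (u @ x1 # x2 # v) y = lpos u y \<and> lpos u y < length u"
    and "\<And>y. y \<in> set v \<Longrightarrow> lpos (u @ x1 # x2 # v) y = length u + 2 + lpos v y"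
    and "lpos (u @ x1 # x2 # v) x1 = length u"
    and "lpos (u @ x1 # x2 # v) x2 = Suc (length u)"
proof -
  have d2: "distinct (x1 # x2 # v)" and d3: "distinct (x2 # v)" using d by auto
  have e1: "lpos (u @ x1 # x2 # v) y = (if y \<in> set u then lpos u y else length u + lpos (x1 # x2 # v) y)"
    if "y \<in> set (u @ x1 # x2 # v)" for y using lpos_append[of u "x1 # x2 # v" y] d that by simp
  have e2: "lpos (x1 # x2 # v) y = (if y = x1 then 0 else Suc (lpos (x2 # v) y))"
    if "y \<in> set (x1 # x2 # v)" for y using lpos_Cons[OF d2 that] .
  have e3: "lpos (x2 # v) y = (if y = x2 then 0 else Suc (lpos v y))"
    if "y \<in> set (x2 # v)" for y using lpos_Cons[OF d3 that] .
  show "\<And>y. y \<in> set u \<Longrightarrow> lpos (u @ x1 # x2 # v) y = lpos u y \<and> lpos u y < length u"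
    using e1 lpos_props by auto
  show "\<And>y. y \<in> set v \<Longrightarrow> lpos (u @ x1 # x2 # v) y = length u + 2 + lpos v y"
  proof -
    fix y assume y: "y \<in> set v"
    then have "y \<notin> set u" "y \<noteq> x1" "y \<noteq> x2" using d by auto
    then show "lpos (u @ x1 # x2 # v) y = length u + 2 + lpos v y" using e1[of y] e2[of y] e3[of y] y by auto
  qed
  show "lpos (u @ x1 # x2 # v) x1 = length u" using e1 e2 d by auto
  show "lpos (u @ x1 # x2 # v) x2 = Suc (length u)"
  proof -
    have "x2 \<notin> set u" "x2 \<noteq> x1" using d by auto
    then show ?thesis using e1[of x2] e2[of x2] e3[of x2] by auto
  qed
qed

lemma cycp_mono: "strict_mono m \<Longrightarrow> cycp (m a) (m b) (m c) = cycp a b c"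
  unfolding cycp_def by (simp add: strict_mono_less)

lemma sidx_insert:
  assumes d: "distinct (u @ p # q # v)" and zT: "(z, True) \<in> set (u @ v)" and zF: "(z, False) \<in> set (u @ v)"
    and pq: "vs s p + vs s q = 0"
  shows "sidx s (u @ p # q # v) z = sidx s (u @ v) z"
proof -
  let ?w' = "u @ p # q # v" and ?w = "u @ v"
  let ?L = "length u"
  define m where "m i = (if i < ?L then i else i + 2)" for i :: nat
  have sm: "strict_mono m" unfolding m_def strict_mono_def by auto
  have d0: "distinct ?w" using d by auto
  note M = lpos_mid[OF d]
  have lw: "lpos ?w y = (if y \<in> set u then lpos u y else ?L + lpos v y)" if "y \<in> set ?w" for y
    using lpos_append[OF d0 that] .
  have pos: "lpos ?w' y = m (lpos ?w y)" if y: "y \<in> set ?w" for y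
  proof (cases "y \<in> set u")
    case True then show ?thesis using M(1)[OF True] lw[OF y] unfolding m_def by simp
  next
    case False then have "y \<in> set v" using y by simp
    then show ?thesis using M(2)[of y] lw[OF y] False unfolding m_def by simp
  qed
  have cy: "cyc ?w' x y z' = cyc ?w x y z'" if "x \<in> set ?w" "y \<in> set ?w" "z' \<in> set ?w" for x y z'
    unfolding cyc_def using pos that cycp_mono[OF sm] by simp
  let ?F' = "\<lambda>y. if cyc ?w' (z, True) y (z, False) then vs s y else 0"
  let ?F = "\<lambda>y. if cyc ?w (z, True) y (z, False) then vs s y else 0"
  have mu: "map ?F' u = map ?F u" by (rule map_cong[OF refl]) (use cy zT zF in auto)
  have mv: "map ?F' v = map ?F v" by (rule map_cong[OF refl]) (use cy zT zF in auto)
  have mn: "m i \<noteq> ?L \<and> m i \<noteq> Suc ?L" for i unfolding m_def by auto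
  have nT: "lpos ?w' (z, True) \<noteq> ?L \<and> lpos ?w' (z, True) \<noteq> Suc ?L" using pos[OF zT] mn by simp
  have nF: "lpos ?w' (z, False) \<noteq> ?L \<and> lpos ?w' (z, False) \<noteq> Suc ?L" using pos[OF zF] mn by simp
  have "cycp (lpos ?w' (z, True)) ?L (lpos ?w' (z, False)) = cycp (lpos ?w' (z, True)) (Suc ?L) (lpos ?w' (z, False))"
    using nT nF unfolding cycp_def by arith
  then have "?F' p + ?F' q = 0" using pq unfolding cyc_def M(3) M(4) by auto
  then show ?thesis unfolding sidx_list[OF d] sidx_list[OF d0] by (simp add: mu mv)
qed

lemma cycp_triv[simp]: "\<not> cycp i i k" "\<not> cycp i k k"
  unfolding cycp_def by auto

lemma cycp_l1: "H \<noteq> L \<Longrightarrow> H \<noteq> Suc L \<Longrightarrow> cycp L (Suc L) H \<and> \<not> cycp (Suc L) L H"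
  unfolding cycp_def by arith
lemma cycp_l2: "T \<noteq> L \<Longrightarrow> T \<noteq> Suc L \<Longrightarrow> cycp T L (Suc L) \<and> \<not> cycp T (Suc L) L"
  unfolding cycp_def by arith
lemma cycp_l3: "T \<noteq> L \<Longrightarrow> T \<noteq> Suc L \<Longrightarrow> H \<noteq> L \<Longrightarrow> H \<noteq> Suc L \<Longrightarrow> cycp T L H = cycp T (Suc L) H"
  unfolding cycp_def by arith
lemma cycp_l4: "Y \<noteq> L \<Longrightarrow> Y \<noteq> Suc L \<Longrightarrow> H \<noteq> L \<Longrightarrow> H \<noteq> Suc L \<Longrightarrow> cycp L Y H = cycp (Suc L) Y H"
  unfolding cycp_def by arith
lemma cycp_l5: "Y \<noteq> L \<Longrightarrow> Y \<noteq> Suc L \<Longrightarrow> T \<noteq> L \<Longrightarrow> T \<noteq> Suc L \<Longrightarrow> cycp T Y L = cycp T Y (Suc L)"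
  unfolding cycp_def by arith


lemma sidx_swap:
  assumes d: "distinct (u @ p # q # v)" and pq: "fst p \<noteq> fst q"
    and zT: "(z, True) \<in> set (u @ p # q # v)" and zF: "(z, False) \<in> set (u @ p # q # v)"
  shows "sidx s (u @ q # p # v) z = sidx s (u @ p # q # v) z +
     (if z = fst p then (if snd p then - vs s q else vs s q)
      else if z = fst q then (if snd q then vs s p else - vs s p) else 0)"
proof -
  let ?w' = "u @ q # p # v" and ?w = "u @ p # q # v"
  let ?L = "length u"
  have d': "distinct ?w'" using d by auto
  note M = lpos_mid[OF d] and M' = lpos_mid[OF d']
  have oth: "lpos ?w' y = lpos ?w y \<and> lpos ?w y \<noteq> ?L \<and> lpos ?w y \<noteq> Suc ?L"
    if y: "y \<in> set u \<or> y \<in> set v" for y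
  proof (cases "y \<in> set u")
    case True
    then show ?thesis using M(1)[OF True] M'(1)[OF True] by simp
  next
    case False
    then have yv: "y \<in> set v" using y by simp
    show ?thesis using M(2)[OF yv] M'(2)[OF yv] by simp
  qed
  have lp: "lpos ?w p = ?L" "lpos ?w q = Suc ?L" "lpos ?w' q = ?L" "lpos ?w' p = Suc ?L"
    using M(3,4) M'(3,4) by auto
  have pqne: "p \<noteq> q" using pq by auto
  let ?F' = "\<lambda>y. if cyc ?w' (z, True) y (z, False) then vs s y else 0"
  let ?F = "\<lambda>y. if cyc ?w (z, True) y (z, False) then vs s y else 0"
  have gen: "lpos ?w x = lpos ?w' x \<and> lpos ?w x \<noteq> ?L \<and> lpos ?w x \<noteq> Suc ?L"
    if "x \<in> set ?w" "x \<noteq> p" "x \<noteq> q" for x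
  proof -
    have "x \<in> set u \<or> x \<in> set v" using that by simp
    from oth[OF this] show ?thesis by simp
  qed
  have zne: "\<not> ((z, True) \<in> {p, q} \<and> (z, False) \<in> {p, q})" using pq pqne by auto
  have eqo: "?F' y = ?F y" if y: "y \<in> set u \<or> y \<in> set v" for y
  proof -
    have Y: "lpos ?w' y = lpos ?w y \<and> lpos ?w y \<noteq> ?L \<and> lpos ?w y \<noteq> Suc ?L" using oth[OF y] .
    have "cycp (lpos ?w' (z, True)) (lpos ?w' y) (lpos ?w' (z, False)) = cycp (lpos ?w (z, True)) (lpos ?w y) (lpos ?w (z, False))"
    proof (cases "(z, True) \<in> {p, q}")
      case True
      then have "(z, False) \<notin> {p, q}" using zne by blast
      then have H: "lpos ?w (z, False) = lpos ?w' (z, False) \<and> lpos ?w (z, False) \<noteq> ?L \<and> lpos ?w (z, False) \<noteq> Suc ?L"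
        using gen[OF zF] by auto
      show ?thesis using True lp H Y cycp_l4[of "lpos ?w y" "length u" "lpos ?w (z, False)"] by auto
    next
      case False
      then have T: "lpos ?w (z, True) = lpos ?w' (z, True) \<and> lpos ?w (z, True) \<noteq> ?L \<and> lpos ?w (z, True) \<noteq> Suc ?L"
        using gen[OF zT] by auto
      show ?thesis
      proof (cases "(z, False) \<in> {p, q}")
        case True
        then show ?thesis using lp T Y cycp_l5[of "lpos ?w y" "length u" "lpos ?w (z, True)"] by auto
      next
        case False
        then have H: "lpos ?w (z, False) = lpos ?w' (z, False) \<and> lpos ?w (z, False) \<noteq> ?L \<and> lpos ?w (z, False) \<noteq> Suc ?L"
          using gen[OF zF] by auto
        then show ?thesis using T Y by simp
      qed
    qed
    then show ?thesis unfolding cyc_def by simp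
  qed
  have mu: "map ?F' u = map ?F u" by (rule map_cong[OF refl]) (use eqo in auto)
  have mv: "map ?F' v = map ?F v" by (rule map_cong[OF refl]) (use eqo in auto)
  have diff: "sidx s ?w' z = sidx s ?w z + (?F' q + ?F' p - ?F p - ?F q)"
    unfolding sidx_list[OF d] sidx_list[OF d'] by (simp add: mu mv)
  have "?F' q + ?F' p - ?F p - ?F q = (if z = fst p then (if snd p then - vs s q else vs s q)
      else if z = fst q then (if snd q then vs s p else - vs s p) else 0)"
  proof (cases "z = fst p")
    case zp: True
    then have nq: "(z, b) \<noteq> q" for b using pq by auto
    show ?thesis
    proof (cases "snd p")
      case True
      then have P: "p = (z, True)" using zp by (cases p) auto
      have H: "lpos ?w (z, False) = lpos ?w' (z, False) \<and> lpos ?w (z, False) \<noteq> ?L \<and> lpos ?w (z, False) \<noteq> Suc ?L"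
        using gen[OF zF] nq P by auto
      show ?thesis using zp True H lp cycp_l1[of "lpos ?w (z, False)" "length u"] unfolding cyc_def P by simp
    next
      case False
      then have P: "p = (z, False)" using zp by (cases p) auto
      have T: "lpos ?w (z, True) = lpos ?w' (z, True) \<and> lpos ?w (z, True) \<noteq> ?L \<and> lpos ?w (z, True) \<noteq> Suc ?L"
        using gen[OF zT] nq P by auto
      show ?thesis using zp False T lp cycp_l2[of "lpos ?w (z, True)" "length u"] unfolding cyc_def P by simp
    qed
  next
    case zp: False
    then have np: "(z, b) \<noteq> p" for b by auto
    show ?thesis
    proof (cases "z = fst q")
      case zq: True
      show ?thesis
      proof (cases "snd q")
        case True
        then have Q: "q = (z, True)" using zq by (cases q) auto
        have H: "lpos ?w (z, False) = lpos ?w' (z, False) \<and> lpos ?w (z, False) \<noteq> ?L \<and> lpos ?w (z, False) \<noteq> Suc ?L"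
          using gen[OF zF] np Q by auto
        show ?thesis using zp zq True H lp cycp_l1[of "lpos ?w (z, False)" "length u"] unfolding cyc_def Q by simp
      next
        case False
        then have Q: "q = (z, False)" using zq by (cases q) auto
        have T: "lpos ?w (z, True) = lpos ?w' (z, True) \<and> lpos ?w (z, True) \<noteq> ?L \<and> lpos ?w (z, True) \<noteq> Suc ?L"
          using gen[OF zT] np Q by auto
        show ?thesis using zp zq False T lp cycp_l2[of "lpos ?w (z, True)" "length u"] unfolding cyc_def Q by simp
      qed
    next
      case zq: False
      then have nq: "(z, b) \<noteq> q" for b by auto
      have H: "lpos ?w (z, False) = lpos ?w' (z, False) \<and> lpos ?w (z, False) \<noteq> ?L \<and> lpos ?w (z, False) \<noteq> Suc ?L"
        using gen[OF zF] nq np by auto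
      have T: "lpos ?w (z, True) = lpos ?w' (z, True) \<and> lpos ?w (z, True) \<noteq> ?L \<and> lpos ?w (z, True) \<noteq> Suc ?L"
        using gen[OF zT] nq np by auto
      have "cycp (lpos ?w (z, True)) ?L (lpos ?w (z, False)) = cycp (lpos ?w (z, True)) (Suc ?L) (lpos ?w (z, False))"
        using T H cycp_l3 by blast
      then show ?thesis using zp zq T H lp unfolding cyc_def by simp
    qed
  qed
  then show ?thesis using diff by simp
qed



abbreviation "g1 t n \<equiv> (t::real) powi n - t powi (- n)"

lemma Phi_alt: "Phi w t = (\<Sum>c\<in>labels w. g1 t (sidx (\<lambda>_. 1) w c))"
  unfolding Phi_def ..

lemma cycp_rot:
  assumes "i < n" "j < n" "k < n"
  shows "cycp (if i = 0 then n - 1 else i - 1) (if j = 0 then n - 1 else j - 1) (if k = 0 then n - 1 else k - 1) = cycp i j k"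
  using assms unfolding cycp_def by (cases "i = 0"; cases "j = 0"; cases "k = 0"; simp; arith)

lemma fwf_rotate1: "fwf (rotate1 w) \<longleftrightarrow> fwf w"
  unfolding fwf_def labels_def by simp

lemma sidx_rotate1:
  assumes d: "distinct w" and cT: "(c, True) \<in> set w" and cF: "(c, False) \<in> set w"
  shows "sidx s (rotate1 w) c = sidx s w c"
proof (cases w)
  case Nil then show ?thesis by simp
next
  case (Cons a xs)
  have d1: "distinct (xs @ [a])" using d Cons by auto
  have lr: "lpos (rotate1 w) y = (if lpos w y = 0 then length w - 1 else lpos w y - 1)" if y: "y \<in> set w" for y
  proof -
    have "lpos (xs @ [a]) y = (if y \<in> set xs then lpos xs y else length xs)"
      using lpos_append[OF d1, of y] y Cons lpos_nth[of "[a]" 0] by auto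
    moreover have "lpos (a # xs) y = (if y = a then 0 else Suc (lpos xs y))"
      using lpos_Cons[of a xs y] d y Cons by simp
    moreover have "y \<noteq> a \<longleftrightarrow> y \<in> set xs" using y d Cons by auto
    ultimately show ?thesis using Cons by auto
  qed
  have cy: "cyc (rotate1 w) x y z = cyc w x y z" if "x \<in> set w" "y \<in> set w" "z \<in> set w" for x y z
    unfolding cyc_def lr[OF that(1)] lr[OF that(2)] lr[OF that(3)]
    by (rule cycp_rot) (use that lpos_props in auto)
  show ?thesis unfolding sidx_def using cT cF by (simp add: cy)
qed

lemma Phi_rotate1: "fwf w \<Longrightarrow> Phi (rotate1 w) t = Phi w t"
  unfolding Phi_def
proof -
  assume f: "fwf w"
  have l: "labels (rotate1 w) = labels w" unfolding labels_def by simp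
  show "(\<Sum>c\<in>labels (rotate1 w). g1 t (sidx (\<lambda>_. 1) (rotate1 w) c)) = (\<Sum>c\<in>labels w. g1 t (sidx (\<lambda>_. 1) w c))"
    unfolding l
  proof (rule sum.cong[OF refl])
    fix c assume "c \<in> labels w"
    then have "(c, True) \<in> set w" "(c, False) \<in> set w" using f unfolding fwf_def by auto
    then show "g1 t (sidx (\<lambda>_. 1) (rotate1 w) c) = g1 t (sidx (\<lambda>_. 1) w c)"
      using sidx_rotate1 f unfolding fwf_def by simp
  qed
qed

lemma Phi_rotate: "fwf w \<Longrightarrow> fwf (rotate n w) \<and> Phi (rotate n w) t = Phi w t"
proof (induction n)
  case 0 then show ?case by simp
next
  case (Suc n)
  then show ?case using Phi_rotate1[of "rotate n w" t] fwf_rotate1[of "rotate n w"] by (simp add: rotate_Suc)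
qed

lemma fwf_rotate: "fwf (rotate n w) \<longleftrightarrow> fwf w"
  unfolding fwf_def labels_def by simp

definition gmap :: "(nat \<Rightarrow> nat) \<Rightarrow> letter \<Rightarrow> letter" where
  "gmap f y = (f (fst y), snd y)"

lemma gmap_eq: "(\<lambda>(c, b). (f c, b)) = gmap f"
  unfolding gmap_def by auto

lemma inj_gmap: "inj_on f (labels w) \<Longrightarrow> inj_on (gmap f) (set w)"
  unfolding inj_on_def gmap_def labels_def by (auto simp: prod_eq_iff)

lemma labels_gmap: "labels (map (gmap f) w) = f ` labels w"
  unfolding labels_def gmap_def by (auto simp: image_image)

lemma fwf_gmap:
  assumes i: "inj_on f (labels w)"
  shows "fwf (map (gmap f) w) \<longleftrightarrow> fwf w"
proof -
  have gi: "inj_on (gmap f) (set w)" using inj_gmap[OF i] .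
  have mem: "(f c, b) \<in> set (map (gmap f) w) \<longleftrightarrow> (c, b) \<in> set w" if c: "c \<in> labels w" for c b
  proof
    assume "(f c, b) \<in> set (map (gmap f) w)"
    then obtain y where y: "y \<in> set w" "gmap f y = (f c, b)" by auto
    then have "fst y \<in> labels w" unfolding labels_def by auto
    then have "fst y = c" using y(2) i c unfolding gmap_def inj_on_def by auto
    then have "y = (c, b)" using y(2) unfolding gmap_def by (cases y) auto
    then show "(c, b) \<in> set w" using y(1) by simp
  next
    assume "(c, b) \<in> set w"
    then have "gmap f (c, b) \<in> set (map (gmap f) w)" by simp
    then show "(f c, b) \<in> set (map (gmap f) w)" unfolding gmap_def by simp
  qed
  show ?thesis
    unfolding fwf_def labels_gmap distinct_map using gi mem by auto
qed

lemma sidx_gmap: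
  assumes i: "inj_on f (labels w)" and c: "c \<in> labels w" and f: "fwf w"
  shows "sidx (\<lambda>_. 1) (map (gmap f) w) (f c) = sidx (\<lambda>_. 1) w c"
proof -
  have gi: "inj_on (gmap f) (set w)" using inj_gmap[OF i] .
  have cT: "(c, True) \<in> set w" and cF: "(c, False) \<in> set w" using f c unfolding fwf_def by auto
  have e: "(f c, True) = gmap f (c, True)" "(f c, False) = gmap f (c, False)" unfolding gmap_def by auto
  have cy: "cyc (map (gmap f) w) (f c, True) (gmap f y) (f c, False) = cyc w (c, True) y (c, False)"
    if "y \<in> set w" for y
    unfolding e cyc_def using lpos_map_inj[OF gi] that cT cF by simp
  have v: "vs (\<lambda>_. 1) (gmap f y) = vs (\<lambda>_. 1) y" for y unfolding vs_def gmap_def by simp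
  show ?thesis unfolding sidx_def set_map sum.reindex[OF gi]
    by (rule sum.cong[OF refl]) (simp add: cy v)
qed

lemma Phi_gmap:
  assumes i: "inj_on f (labels w)" and f: "fwf w"
  shows "Phi (map (gmap f) w) t = Phi w t"
  unfolding Phi_def labels_gmap sum.reindex[OF i]
  by (rule sum.cong[OF refl]) (simp add: sidx_gmap[OF i _ f])

lemma labels_append: "labels (u @ v) = labels u \<union> labels v"
  unfolding labels_def by auto
lemma labels_Cons: "labels (x # v) = insert (fst x) (labels v)"
  unfolding labels_def by auto
lemma labels_Nil: "labels [] = {}"
  unfolding labels_def by auto

lemma notin_labels: "c \<notin> labels w \<Longrightarrow> (c, b) \<notin> set w"
  unfolding labels_def by force

lemma vs1: "vs (\<lambda>_. 1) y = (if snd y then -1 else 1)"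
  unfolding vs_def by simp

lemma F1_fwf:
  assumes c: "c \<notin> labels (u @ v)"
  shows "fwf (u @ [(c, b), (c, \<not> b)] @ v) \<longleftrightarrow> fwf (u @ v)"
proof -
  have n: "(c, x) \<notin> set u" "(c, x) \<notin> set v" for x using notin_labels[OF c, of x] by auto
  have m: "(d, x) \<in> set (u @ [(c, b), (c, \<not> b)] @ v) \<longleftrightarrow> (d, x) \<in> set (u @ v)" if "d \<noteq> c" for d x
    using that by auto
  have bb: "(c, True) \<in> set (u @ [(c, b), (c, \<not> b)] @ v) \<and> (c, False) \<in> set (u @ [(c, b), (c, \<not> b)] @ v)"
    by (cases b) auto
  have l: "labels (u @ [(c, b), (c, \<not> b)] @ v) = insert c (labels (u @ v))"
    by (simp add: labels_append labels_Cons)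
  have dd: "distinct (u @ [(c, b), (c, \<not> b)] @ v) \<longleftrightarrow> distinct (u @ v)"
    using n by auto
  have ne: "d \<in> labels (u @ v) \<Longrightarrow> d \<noteq> c" for d using c by auto
  show ?thesis
    unfolding fwf_def l dd using bb m ne by auto
qed

lemma F1_Phi:
  assumes c: "c \<notin> labels (u @ v)" and f: "fwf (u @ v)"
  shows "Phi (u @ [(c, b), (c, \<not> b)] @ v) t = Phi (u @ v) t"
proof -
  let ?w = "u @ [(c, b), (c, \<not> b)] @ v"
  have f': "fwf ?w" using F1_fwf[OF c] f by simp
  have d': "distinct ?w" using f' unfolding fwf_def by simp
  have l: "labels ?w = insert c (labels (u @ v))" by (simp add: labels_append labels_Cons)
  have ic: "sidx (\<lambda>_. 1) ?w c = 0"
  proof (cases b)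
    case True
    then have "?w = u @ (c, True) # [] @ (c, False) # v" by simp
    then show ?thesis using sidx_split1[of u c "[]" v] d' by simp
  next
    case False
    then have e: "?w = u @ (c, False) # [] @ (c, True) # v" by simp
    show ?thesis using sidx_split2[of u c "[]" v] f' unfolding e by simp
  qed
  have id: "sidx (\<lambda>_. 1) ?w e = sidx (\<lambda>_. 1) (u @ v) e" if e: "e \<in> labels (u @ v)" for e
  proof -
    have "(e, True) \<in> set (u @ v)" "(e, False) \<in> set (u @ v)" using f e unfolding fwf_def by auto
    moreover have "vs (\<lambda>_. 1) (c, b) + vs (\<lambda>_. 1) (c, \<not> b) = 0" by (simp add: vs1)
    ultimately show ?thesis using sidx_insert[of u "(c, b)" "(c, \<not> b)" v e "\<lambda>_. 1"] d' by simp
  qed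
  have "Phi ?w t = g1 t (sidx (\<lambda>_. 1) ?w c) + (\<Sum>e\<in>labels (u @ v). g1 t (sidx (\<lambda>_. 1) ?w e))"
    unfolding Phi_def l using c by (simp del: labels_append)
  also have "\<dots> = Phi (u @ v) t" unfolding Phi_def ic using id by simp
  finally show ?thesis .
qed

lemma fwf_add:
  assumes dd: "distinct w' \<longleftrightarrow> distinct w"
    and st: "set w' = set w \<union> {(c, True), (c, False), (d, True), (d, False)}"
    and c: "c \<notin> labels w" and d: "d \<notin> labels w"
  shows "fwf w' \<longleftrightarrow> fwf w"
proof -
  have l: "labels w' = labels w \<union> {c, d}" unfolding labels_def st by auto
  have ne: "e \<in> labels w \<Longrightarrow> e \<noteq> c \<and> e \<noteq> d" for e using c d by auto
  have m: "e \<noteq> c \<Longrightarrow> e \<noteq> d \<Longrightarrow> (e, x) \<in> set w' \<longleftrightarrow> (e, x) \<in> set w" for e x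
    unfolding st by auto
  have cd: "(e, True) \<in> set w' \<and> (e, False) \<in> set w'" if "e = c \<or> e = d" for e
    using that unfolding st by auto
  show ?thesis unfolding fwf_def l dd using ne m cd by auto
qed

definition F2w :: "letter list \<Rightarrow> letter list \<Rightarrow> letter list \<Rightarrow> nat \<Rightarrow> nat \<Rightarrow> bool \<Rightarrow> bool \<Rightarrow> letter list" where
  "F2w u v x c d b var = u @ [(c, b), (d, \<not> b)] @ v @
     (if var then [(d, b), (c, \<not> b)] else [(c, \<not> b), (d, b)]) @ x"

lemma F2_fwf:
  assumes c: "c \<notin> labels (u @ v @ x)" and d: "d \<notin> labels (u @ v @ x)" and cd: "c \<noteq> d"
  shows "fwf (F2w u v x c d b var) \<longleftrightarrow> fwf (u @ v @ x)"
proof (rule fwf_add[OF _ _ c d])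
  have n: "(c, y) \<notin> set (u @ v @ x)" "(d, y) \<notin> set (u @ v @ x)" for y
    using notin_labels[OF c] notin_labels[OF d] by auto
  then show "distinct (F2w u v x c d b var) \<longleftrightarrow> distinct (u @ v @ x)"
    unfolding F2w_def using cd by (cases var; cases b; auto)
  show "set (F2w u v x c d b var) = set (u @ v @ x) \<union> {(c, True), (c, False), (d, True), (d, False)}"
    unfolding F2w_def by (cases var; cases b; auto)
qed

lemma g1_neg: "g1 t (- n) = - g1 t n"
  by simp

lemma F2_Phi:
  assumes c: "c \<notin> labels (u @ v @ x)" and d: "d \<notin> labels (u @ v @ x)" and cd: "c \<noteq> d"
    and f: "fwf (u @ v @ x)"
  shows "Phi (F2w u v x c d b var) t = Phi (u @ v @ x) t"
proof -
  let ?w = "F2w u v x c d b var"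
  let ?S = "sum_list (map (vs (\<lambda>_. 1)) v)"
  have f': "fwf ?w" using F2_fwf[OF c d cd] f by simp
  have d': "distinct ?w" using f' unfolding fwf_def by simp
  have l: "labels ?w = insert c (insert d (labels (u @ v @ x)))"
    unfolding F2w_def labels_def by (cases var; auto)
  have icd: "sidx (\<lambda>_. 1) ?w d = - sidx (\<lambda>_. 1) ?w c"
  proof (cases var)
    case False
    show ?thesis
    proof (cases b)
      case True
      have e1: "?w = u @ (c, True) # ((d, False) # v) @ (c, False) # ((d, True) # x)"
        unfolding F2w_def using False True by simp
      have e2: "?w = (u @ [(c, True)]) @ (d, False) # (v @ [(c, False)]) @ (d, True) # x"
        unfolding F2w_def using False True by simp
      have "sidx (\<lambda>_. 1) ?w c = 1 + ?S" using sidx_split1[of u c "(d, False) # v" "(d, True) # x" "\<lambda>_. 1"] d'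
        unfolding e1 by (simp add: vs1)
      moreover have "sidx (\<lambda>_. 1) ?w d = - (?S + 1)" using sidx_split2[of "u @ [(c, True)]" d "v @ [(c, False)]" x "\<lambda>_. 1"] f'
        unfolding e2 by (simp add: vs1)
      ultimately show ?thesis by simp
    next
      case b: False
      have e1: "?w = u @ (c, False) # ((d, True) # v) @ (c, True) # ((d, False) # x)"
        unfolding F2w_def using False b by simp
      have e2: "?w = (u @ [(c, False)]) @ (d, True) # (v @ [(c, True)]) @ (d, False) # x"
        unfolding F2w_def using False b by simp
      have "sidx (\<lambda>_. 1) ?w c = - (-1 + ?S)" using sidx_split2[of u c "(d, True) # v" "(d, False) # x" "\<lambda>_. 1"] f'
        unfolding e1 by (simp add: vs1)
      moreover have "sidx (\<lambda>_. 1) ?w d = ?S - 1" using sidx_split1[of "u @ [(c, False)]" d "v @ [(c, True)]" x "\<lambda>_. 1"] d'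
        unfolding e2 by (simp add: vs1)
      ultimately show ?thesis by simp
    qed
  next
    case True
    show ?thesis
    proof (cases b)
      case b: True
      have e1: "?w = u @ (c, True) # ((d, False) # v @ [(d, True)]) @ (c, False) # x"
        unfolding F2w_def using True b by simp
      have e2: "?w = (u @ [(c, True)]) @ (d, False) # v @ (d, True) # ((c, False) # x)"
        unfolding F2w_def using True b by simp
      have "sidx (\<lambda>_. 1) ?w c = ?S" using sidx_split1[of u c "(d, False) # v @ [(d, True)]" x "\<lambda>_. 1"] d'
        unfolding e1 by (simp add: vs1)
      moreover have "sidx (\<lambda>_. 1) ?w d = - ?S" using sidx_split2[of "u @ [(c, True)]" d v "(c, False) # x" "\<lambda>_. 1"] f'
        unfolding e2 by (simp add: vs1)
      ultimately show ?thesis by simp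
    next
      case b: False
      have e1: "?w = u @ (c, False) # ((d, True) # v @ [(d, False)]) @ (c, True) # x"
        unfolding F2w_def using True b by simp
      have e2: "?w = (u @ [(c, False)]) @ (d, True) # v @ (d, False) # ((c, True) # x)"
        unfolding F2w_def using True b by simp
      have "sidx (\<lambda>_. 1) ?w c = - ?S" using sidx_split2[of u c "(d, True) # v @ [(d, False)]" x "\<lambda>_. 1"] f'
        unfolding e1 by (simp add: vs1)
      moreover have "sidx (\<lambda>_. 1) ?w d = ?S" using sidx_split1[of "u @ [(c, False)]" d v "(c, True) # x" "\<lambda>_. 1"] d'
        unfolding e2 by (simp add: vs1)
      ultimately show ?thesis by simp
    qed
  qed
  have ie: "sidx (\<lambda>_. 1) ?w e = sidx (\<lambda>_. 1) (u @ v @ x) e" if e: "e \<in> labels (u @ v @ x)" for e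
  proof -
    obtain P Q where PQ: "(if var then [(d, b), (c, \<not> b)] else [(c, \<not> b), (d, b)]) = [P, Q]"
      and vPQ: "vs (\<lambda>_. 1) P + vs (\<lambda>_. 1) Q = 0" by (cases var) (auto simp: vs1)
    have w: "?w = u @ (c, b) # (d, \<not> b) # (v @ P # Q # x)" unfolding F2w_def PQ by simp
    have d1: "distinct (u @ (c, b) # (d, \<not> b) # (v @ P # Q # x))" using d' unfolding w .
    have d2: "distinct ((u @ v) @ P # Q # x)" using d1 by auto
    have eT: "(e, True) \<in> set (u @ v @ x)" "(e, False) \<in> set (u @ v @ x)" using f e unfolding fwf_def by auto
    have "sidx (\<lambda>_. 1) ?w e = sidx (\<lambda>_. 1) (u @ v @ P # Q # x) e"
      unfolding w by (rule sidx_insert[OF d1]) (use eT in \<open>auto simp: vs1\<close>)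
    also have "\<dots> = sidx (\<lambda>_. 1) ((u @ v) @ P # Q # x) e" by simp
    also have "\<dots> = sidx (\<lambda>_. 1) ((u @ v) @ x) e"
      by (rule sidx_insert[OF d2]) (use eT vPQ in auto)
    finally show ?thesis by simp
  qed
  have cn: "c \<notin> insert d (labels (u @ v @ x))" using c cd by auto
  have "Phi ?w t = g1 t (sidx (\<lambda>_. 1) ?w c) + g1 t (sidx (\<lambda>_. 1) ?w d) + (\<Sum>e\<in>labels (u @ v @ x). g1 t (sidx (\<lambda>_. 1) ?w e))"
    unfolding Phi_def l using cn d by (simp del: labels_append add: add.assoc)
  also have "\<dots> = Phi (u @ v @ x) t" unfolding Phi_def icd g1_neg using ie by simp
  finally show ?thesis .
qed



definition Dsw :: "letter \<Rightarrow> letter \<Rightarrow> nat \<Rightarrow> int" where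
  "Dsw p q z = (if z = fst p then (if snd p then - vs (\<lambda>_. 1) q else vs (\<lambda>_. 1) q)
      else if z = fst q then (if snd q then vs (\<lambda>_. 1) p else - vs (\<lambda>_. 1) p) else 0)"

lemma F3_key:
  assumes F: "F3_cond a b c d e f" and dist: "distinct [a, b, c, d, e, f]"
  shows "Dsw a b z + Dsw c d z + Dsw e f z = 0"
proof -
  obtain X Y Z where xyz: "distinct [X, Y, Z]" and
    ab: "{fst a, fst b} = {X, Z}" and cd: "{fst c, fst d} = {X, Y}" and ef: "{fst e, fst f} = {Y, Z}" and
    r: "let eta1 = (fst a = X); eta2 = (fst c = Y); eta3 = (fst e = Z);
           rX = sg (eta1 = eta2) * sg ((X, True) \<in> {c, d});
           rY = sg (eta2 = eta3) * sg ((Y, True) \<in> {e, f});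
           rZ = sg (eta3 = eta1) * sg ((Z, True) \<in> {a, b})
       in rX = rY \<and> rY = rZ"
    using F unfolding F3_cond_def by blast
  obtain a1 a2 where A: "a = (a1, a2)" by (cases a)
  obtain b1 b2 where B: "b = (b1, b2)" by (cases b)
  obtain c1 c2 where C: "c = (c1, c2)" by (cases c)
  obtain d1 d2 where D: "d = (d1, d2)" by (cases d)
  obtain e1 e2 where E: "e = (e1, e2)" by (cases e)
  obtain f1 f2 where FF: "f = (f1, f2)" by (cases f)
  have ab': "(a1 = X \<and> b1 = Z) \<or> (a1 = Z \<and> b1 = X)" using ab xyz unfolding A B by (auto simp: doubleton_eq_iff)
  have cd': "(c1 = X \<and> d1 = Y) \<or> (c1 = Y \<and> d1 = X)" using cd xyz unfolding C D by (auto simp: doubleton_eq_iff)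
  have ef': "(e1 = Y \<and> f1 = Z) \<or> (e1 = Z \<and> f1 = Y)" using ef xyz unfolding E FF by (auto simp: doubleton_eq_iff)
  have xy: "X \<noteq> Y" "X \<noteq> Z" "Y \<noteq> Z" "Y \<noteq> X" "Z \<noteq> X" "Z \<noteq> Y" using xyz by auto
  show ?thesis
    using ab' cd' ef' r dist unfolding A B C D E FF Dsw_def
    apply (elim disjE conjE)
    apply (hypsubst_thin)+
    apply (cases a2; cases b2; cases c2; cases d2; cases e2; cases f2; simp add: xy vs1 sg_def Let_def)+
    done
qed

lemma F3_fst: "F3_cond a b c d e f \<Longrightarrow> fst a \<noteq> fst b \<and> fst c \<noteq> fst d \<and> fst e \<noteq> fst f"
  unfolding F3_cond_def by (auto simp: doubleton_eq_iff)

lemma F3_fwf: "fwf (u @ [b, a] @ v @ [d, c] @ x @ [f, e] @ y) \<longleftrightarrow> fwf (u @ [a, b] @ v @ [c, d] @ x @ [e, f] @ y)"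
proof -
  have s: "set (u @ [b, a] @ v @ [d, c] @ x @ [f, e] @ y) = set (u @ [a, b] @ v @ [c, d] @ x @ [e, f] @ y)" by auto
  have d: "distinct (u @ [b, a] @ v @ [d, c] @ x @ [f, e] @ y) = distinct (u @ [a, b] @ v @ [c, d] @ x @ [e, f] @ y)"
    by auto
  show ?thesis unfolding fwf_def labels_def s d ..
qed

lemma F3_Phi:
  assumes F: "F3_cond a b c d e f" and f: "fwf (u @ [a, b] @ v @ [c, d] @ x @ [e, f] @ y)"
  shows "Phi (u @ [b, a] @ v @ [d, c] @ x @ [f, e] @ y) t = Phi (u @ [a, b] @ v @ [c, d] @ x @ [e, f] @ y) t"
proof -
  let ?w0 = "u @ [a, b] @ v @ [c, d] @ x @ [e, f] @ y"
  let ?w1 = "u @ [b, a] @ v @ [c, d] @ x @ [e, f] @ y"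
  let ?w2 = "u @ [b, a] @ v @ [d, c] @ x @ [e, f] @ y"
  let ?w3 = "u @ [b, a] @ v @ [d, c] @ x @ [f, e] @ y"
  have d0: "distinct ?w0" using f unfolding fwf_def by simp
  have dist: "distinct [a, b, c, d, e, f]" using d0 by auto
  have fs: "fst a \<noteq> fst b" "fst c \<noteq> fst d" "fst e \<noteq> fst f" using F3_fst[OF F] by auto
  have l: "labels ?w3 = labels ?w0" unfolding labels_def by auto
  have key: "sidx (\<lambda>_. 1) ?w3 z = sidx (\<lambda>_. 1) ?w0 z" if z: "z \<in> labels ?w0" for z
  proof -
    have zT: "(z, True) \<in> set ?w0" and zF: "(z, False) \<in> set ?w0" using f z unfolding fwf_def by auto
    have e0: "?w0 = u @ a # b # (v @ [c, d] @ x @ [e, f] @ y)" by simp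
    have e1: "?w1 = u @ b # a # (v @ [c, d] @ x @ [e, f] @ y)" by simp
    have e1': "?w1 = (u @ [b, a] @ v) @ c # d # (x @ [e, f] @ y)" by simp
    have e2: "?w2 = (u @ [b, a] @ v) @ d # c # (x @ [e, f] @ y)" by simp
    have e2': "?w2 = (u @ [b, a] @ v @ [d, c] @ x) @ e # f # y" by simp
    have e3: "?w3 = (u @ [b, a] @ v @ [d, c] @ x) @ f # e # y" by simp
    have d1: "distinct ?w1" and d2: "distinct ?w2" using d0 by auto
    have s1: "set ?w1 = set ?w0" and s2: "set ?w2 = set ?w0" by auto
    have "sidx (\<lambda>_. 1) ?w1 z = sidx (\<lambda>_. 1) ?w0 z + Dsw a b z"
      unfolding e1 e0 Dsw_def by (rule sidx_swap) (use d0 fs zT zF in auto)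
    moreover have "sidx (\<lambda>_. 1) ?w2 z = sidx (\<lambda>_. 1) ?w1 z + Dsw c d z"
      unfolding e2 e1' Dsw_def by (rule sidx_swap) (use d1 fs zT zF s1 in auto)
    moreover have "sidx (\<lambda>_. 1) ?w3 z = sidx (\<lambda>_. 1) ?w2 z + Dsw e f z"
      unfolding e3 e2' Dsw_def by (rule sidx_swap) (use d2 fs zT zF s2 in auto)
    ultimately show ?thesis using F3_key[OF F dist, of z] by simp
  qed
  show ?thesis unfolding Phi_def l using key by simp
qed



lemma flat_step_inv:
  assumes st: "flat_step w w'"
  shows "(fwf w \<longleftrightarrow> fwf w') \<and> (fwf w \<longrightarrow> Phi w t = Phi w' t)"
  using st unfolding flat_step_def
proof (elim disjE)
  assume "frot_move w w'"
  then obtain n where w': "w' = rotate n w" unfolding frot_move_def by blast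
  show ?thesis unfolding w' using fwf_rotate[of n w] Phi_rotate[of w n t] by auto
next
  assume "fiso_move w w'"
  then obtain f where i: "inj_on f (labels w)" and w': "w' = map (gmap f) w"
    unfolding fiso_move_def gmap_eq by blast
  show ?thesis unfolding w' using fwf_gmap[OF i] Phi_gmap[OF i, of t] by auto
next
  assume "F1_move w w'"
  then obtain u v c b where w: "w = u @ v" and c: "c \<notin> labels w" and w': "w' = u @ [(c, b), (c, \<not> b)] @ v"
    unfolding F1_move_def by blast
  show ?thesis unfolding w' w using F1_fwf[of c u v b] F1_Phi[of c u v b t] c w by auto
next
  assume "F2_move w w'"
  then obtain u v x c d b where w: "w = u @ v @ x" and c: "c \<notin> labels w" and d: "d \<notin> labels w" and cd: "c \<noteq> d"
    and w': "w' = F2w u v x c d b False \<or> w' = F2w u v x c d b True"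
    unfolding F2_move_def F2w_def by auto
  from w' obtain var where w'': "w' = F2w u v x c d b var" by blast
  show ?thesis unfolding w'' w using F2_fwf[of c u v x d b var] F2_Phi[of c u v x d b var t] c d cd w by auto
next
  assume "F3_move w w'"
  then obtain u v x y a b c d e f where F: "F3_cond a b c d e f" and
    w: "w = u @ [a, b] @ v @ [c, d] @ x @ [e, f] @ y" and w': "w' = u @ [b, a] @ v @ [d, c] @ x @ [f, e] @ y"
    unfolding F3_move_def by blast
  show ?thesis unfolding w w' using F3_fwf[of u b a v d c x f e y] F3_Phi[OF F, of u v x y t] by auto
qed

lemma flat_equiv_inv:
  assumes "flat_equiv w w'" "fwf w"
  shows "fwf w' \<and> Phi w t = Phi w' t"
  using assms unfolding flat_equiv_def
proof (induction rule: rtranclp_induct)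
  case base then show ?case by simp
next
  case (step y z)
  then have fy: "fwf y" and py: "Phi w t = Phi y t" by auto
  from step(2) show ?case
  proof
    assume "flat_step y z"
    then show ?thesis using flat_step_inv[of y z t] fy py by auto
  next
    assume "flat_step z y"
    then show ?thesis using flat_step_inv[of z y t] fy py by auto
  qed
qed



lemma fst_fl[simp]: "fst (fl s y) = fst y"
  unfolding fl_def by simp

lemma rot_props:
  assumes "rot_move K K'"
  shows "(gauss_wf K \<longleftrightarrow> gauss_wf K') \<and> (gauss_wf K \<longrightarrow> flat_step (flatten K) (flatten K') \<or> flatten K = flatten K')"
proof -
  obtain w s n where K: "K = (w, s)" and K': "K' = (rotate n w, s)" using assms unfolding rot_move_def by blast
  have l: "labels (rotate n w) = labels w" unfolding labels_def by simp
  have "flat_step (flatten K) (flatten K')"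
    unfolding K K' flatten_eq flat_step_def frot_move_def by (auto simp: rotate_map)
  then show ?thesis unfolding K K' gauss_wf_iff l fwf_rotate by simp
qed

lemma iso_props:
  assumes "iso_move K K'"
  shows "(gauss_wf K \<longleftrightarrow> gauss_wf K') \<and> (gauss_wf K \<longrightarrow> flat_step (flatten K) (flatten K') \<or> flatten K = flatten K')"
proof -
  obtain w s w' s' f where K: "K = (w, s)" and K': "K' = (w', s')" and i: "inj_on f (labels w)"
    and w': "w' = map (gmap f) w" and ss: "\<forall>c\<in>labels w. s' (f c) = s c"
    using assms unfolding iso_move_def gmap_eq by blast
  have fl: "map (fl s') w' = map (gmap f) (map (fl s) w)"
    unfolding w' map_map
  proof (rule map_cong[OF refl])
    fix y assume "y \<in> set w"
    then have "fst y \<in> labels w" unfolding labels_def by auto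
    then show "(fl s' \<circ> gmap f) y = (gmap f \<circ> fl s) y" using ss unfolding fl_def gmap_def by simp
  qed
  have "flat_step (flatten K) (flatten K')"
    unfolding K K' flatten_eq flat_step_def fiso_move_def fl gmap_eq labels_map_fl using i by blast
  moreover have "gauss_wf K \<longleftrightarrow> gauss_wf K'"
    unfolding K K' gauss_wf_iff w' fwf_gmap[OF i] labels_gmap using ss by auto
  ultimately show ?thesis by simp
qed

lemma map_fl_upd: "c \<notin> labels u \<Longrightarrow> map (fl (s(c := e))) u = map (fl s) u"
  by (rule map_cong[OF refl]) (auto simp: fl_def labels_def)


lemma R1_props:
  assumes "R1_move K K'"
  shows "(gauss_wf K \<longleftrightarrow> gauss_wf K') \<and> (gauss_wf K \<longrightarrow> flat_step (flatten K) (flatten K') \<or> flatten K = flatten K')"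
proof -
  obtain u v s c ov e where K: "K = (u @ v, s)" and c: "c \<notin> labels (u @ v)" and e: "e = 1 \<or> e = -1"
    and K': "K' = (u @ [(c, ov), (c, \<not> ov)] @ v, s(c := e))"
    using assms unfolding R1_move_def by blast
  have cu: "c \<notin> labels u" and cv: "c \<notin> labels v" using c by (auto simp: labels_append)
  have l: "labels (u @ [(c, ov), (c, \<not> ov)] @ v) = insert c (labels (u @ v))" by (simp add: labels_append labels_Cons)
  have w: "gauss_wf K \<longleftrightarrow> gauss_wf K'"
    unfolding K K' gauss_wf_iff F1_fwf[OF c] l using c e by force
  have "flatten K' = map (fl s) u @ [(c, ov = (e = 1)), (c, \<not> (ov = (e = 1)))] @ map (fl s) v"
    unfolding K' flatten_eq map_append map_fl_upd[OF cu] map_fl_upd[OF cv] by (cases ov) (simp_all add: fl_def)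
  moreover have "flatten K = map (fl s) u @ map (fl s) v" unfolding K flatten_eq by simp
  moreover have "c \<notin> labels (map (fl s) u @ map (fl s) v)" using c
    unfolding map_append[symmetric] labels_map_fl .
  ultimately have "F1_move (flatten K) (flatten K')" unfolding F1_move_def
    by (intro exI[of _ "map (fl s) u"] exI[of _ "map (fl s) v"] exI[of _ c] exI[of _ "ov = (e = 1)"]) simp
  then show ?thesis using w unfolding flat_step_def by simp
qed









lemma R2_props:
  assumes "R2_move K K'"
  shows "(gauss_wf K \<longleftrightarrow> gauss_wf K') \<and> (gauss_wf K \<longrightarrow> flat_step (flatten K) (flatten K') \<or> flatten K = flatten K')"
proof -
  obtain u v x s c d ov e where K: "K = (u @ v @ x, s)" and c: "c \<notin> labels (u @ v @ x)" and d: "d \<notin> labels (u @ v @ x)"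
    and cd: "c \<noteq> d" and e: "e = 1 \<or> e = -1" and
    K': "K' = (u @ [(c, ov), (d, ov)] @ v @ [(c, \<not> ov), (d, \<not> ov)] @ x, s(c := e, d := - e)) \<or>
       K' = (u @ [(c, ov), (d, ov)] @ v @ [(d, \<not> ov), (c, \<not> ov)] @ x, s(c := e, d := - e))"
    using assms unfolding R2_move_def by blast
  obtain var where K'': "K' = (u @ [(c, ov), (d, ov)] @ v @
       (if var then [(d, \<not> ov), (c, \<not> ov)] else [(c, \<not> ov), (d, \<not> ov)]) @ x, s(c := e, d := - e))"
  proof (cases "K' = (u @ [(c, ov), (d, ov)] @ v @ [(c, \<not> ov), (d, \<not> ov)] @ x, s(c := e, d := - e))")
    case True then show ?thesis by (intro that[of False]) simp
  next
    case False then show ?thesis using K' by (intro that[of True]) simp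
  qed
  let ?w' = "u @ [(c, ov), (d, ov)] @ v @ (if var then [(d, \<not> ov), (c, \<not> ov)] else [(c, \<not> ov), (d, \<not> ov)]) @ x"
  have n: "(c, y) \<notin> set (u @ v @ x)" "(d, y) \<notin> set (u @ v @ x)" for y
    using notin_labels[OF c] notin_labels[OF d] by auto
  have ff: "fwf ?w' \<longleftrightarrow> fwf (u @ v @ x)"
  proof (rule fwf_add[OF _ _ c d])
    show "distinct ?w' \<longleftrightarrow> distinct (u @ v @ x)" using n cd by (cases var; cases ov; auto)
    show "set ?w' = set (u @ v @ x) \<union> {(c, True), (c, False), (d, True), (d, False)}"
      by (cases var; cases ov; auto)
  qed
  have l: "labels ?w' = insert c (insert d (labels (u @ v @ x)))"
    unfolding labels_def by (cases var; auto)
  have w: "gauss_wf K \<longleftrightarrow> gauss_wf K'"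
  proof -
    have "z \<in> labels (u @ v @ x) \<Longrightarrow> (s(c := e, d := - e)) z = s z" for z using c d by auto
    then have "(\<forall>z\<in>insert c (insert d (labels (u @ v @ x))). (s(c := e, d := - e)) z = 1 \<or> (s(c := e, d := - e)) z = -1)
       \<longleftrightarrow> (\<forall>z\<in>labels (u @ v @ x). s z = 1 \<or> s z = -1)" using e cd by auto
    then show ?thesis unfolding K K'' gauss_wf_iff ff l by simp
  qed
  let ?s' = "s(c := e, d := - e)"
  have mu: "map (fl ?s') z = map (fl s) z" if "z \<in> {u, v, x}" for z
    by (rule map_cong[OF refl]) (use that c d in \<open>auto simp: fl_def labels_def\<close>)
  let ?b = "ov = (e = 1)"
  let ?U = "map (fl s) u" and ?V = "map (fl s) v" and ?X = "map (fl s) x"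
  have F2: "flatten K' = F2w ?U ?V ?X c d ?b var"
  proof -
    have h1: "fl ?s' (c, y) = (c, y = (e = 1))" for y using cd unfolding fl_def by simp
    have h2: "fl ?s' (d, y) = (d, \<not> (y = (e = 1)))" for y using e unfolding fl_def by auto
    show ?thesis unfolding K'' flatten_eq F2w_def
      using mu[of u] mu[of v] mu[of x] by (cases var; cases ov) (simp_all add: h1 h2)
  qed
  have dj: "F2w ?U ?V ?X c d ?b var = ?U @ [(c, ?b), (d, \<not> ?b)] @ ?V @ [(c, \<not> ?b), (d, ?b)] @ ?X \<or>
            F2w ?U ?V ?X c d ?b var = ?U @ [(c, ?b), (d, \<not> ?b)] @ ?V @ [(d, ?b), (c, \<not> ?b)] @ ?X"
    unfolding F2w_def by (cases var) simp_all
  have fK: "flatten K = ?U @ ?V @ ?X" unfolding K flatten_eq by simp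
  have cdn: "c \<notin> labels (flatten K)" "d \<notin> labels (flatten K)" unfolding K flatten_eq labels_map_fl using c d by auto
  have "F2_move (flatten K) (flatten K')" unfolding F2_move_def
    apply (rule exI[of _ ?U], rule exI[of _ ?V], rule exI[of _ ?X], rule exI[of _ c], rule exI[of _ d], rule exI[of _ ?b], intro conjI)
       apply (rule fK)
      apply (rule cdn(1))
     apply (rule cdn(2))
    apply (rule cd)
    unfolding F2 by (rule dj)
  then show ?thesis using w unfolding flat_step_def by simp
qed

lemma sg_fl:
  assumes cd: "{fst c, fst d} = {X, Y}" and xy: "X \<noteq> Y" and sX: "s X = 1 \<or> s X = -1"
  shows "sg ((X, True) \<in> {fl s c, fl s d}) = s X * sg ((X, True) \<in> {c, d})"
proof -
  obtain c1 c2 where C: "c = (c1, c2)" by (cases c)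
  obtain d1 d2 where D: "d = (d1, d2)" by (cases d)
  have "(c1 = X \<and> d1 = Y) \<or> (c1 = Y \<and> d1 = X)" using cd xy unfolding C D by (auto simp: doubleton_eq_iff)
  then show ?thesis using xy sX unfolding C D
    by (elim disjE conjE; hypsubst_thin; cases c2; cases d2; auto simp: fl_def sg_def)
qed

lemma R3_F3:
  assumes R: "R3_cond s a b c d e f" and sg: "\<forall>l\<in>{a, b, c, d, e, f}. s (fst l) = 1 \<or> s (fst l) = -1"
  shows "F3_cond (fl s a) (fl s b) (fl s c) (fl s d) (fl s e) (fl s f)"
proof -
  obtain X Y Z where xyz: "distinct [X, Y, Z]" and
    ab: "{fst a, fst b} = {X, Z}" and cd: "{fst c, fst d} = {X, Y}" and ef: "{fst e, fst f} = {Y, Z}" and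
    r: "s X * sg ((fst a = X) = (fst c = Y)) * sg ((X, True) \<in> {c, d}) =
          s Y * sg ((fst c = Y) = (fst e = Z)) * sg ((Y, True) \<in> {e, f}) \<and>
        s Y * sg ((fst c = Y) = (fst e = Z)) * sg ((Y, True) \<in> {e, f}) =
          s Z * sg ((fst e = Z) = (fst a = X)) * sg ((Z, True) \<in> {a, b})"
    using R unfolding R3_cond_def Let_def by blast
  have sX: "s X = 1 \<or> s X = -1" using sg cd by (auto simp: doubleton_eq_iff)
  have sY: "s Y = 1 \<or> s Y = -1" using sg ef by (auto simp: doubleton_eq_iff)
  have sZ: "s Z = 1 \<or> s Z = -1" using sg ab by (auto simp: doubleton_eq_iff)
  have ab': "{fst a, fst b} = {Z, X}" using ab by auto
  have gX: "sg ((X, True) \<in> {fl s c, fl s d}) = s X * sg ((X, True) \<in> {c, d})"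
    using sg_fl[of c d X Y s] cd sX xyz by auto
  have gY: "sg ((Y, True) \<in> {fl s e, fl s f}) = s Y * sg ((Y, True) \<in> {e, f})"
    using sg_fl[of e f Y Z s] ef sY xyz by auto
  have gZ: "sg ((Z, True) \<in> {fl s a, fl s b}) = s Z * sg ((Z, True) \<in> {a, b})"
    using sg_fl[of a b Z X s] ab' sZ xyz by auto
  show ?thesis unfolding F3_cond_def fst_fl
    apply (rule exI[of _ X], rule exI[of _ Y], rule exI[of _ Z])
    unfolding Let_def gX gY gZ using xyz ab cd ef r by (simp add: mult_ac)
qed


lemma R3_props:
  assumes "R3_move K K'"
  shows "(gauss_wf K \<longleftrightarrow> gauss_wf K') \<and> (gauss_wf K \<longrightarrow> flat_step (flatten K) (flatten K') \<or> flatten K = flatten K')"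
proof -
  obtain u v x y s a b c d e f where R: "R3_cond s a b c d e f" and
      K: "K = (u @ [a, b] @ v @ [c, d] @ x @ [e, f] @ y, s)" and
      K': "K' = (u @ [b, a] @ v @ [d, c] @ x @ [f, e] @ y, s)"
    using assms unfolding R3_move_def by blast
  have l: "labels (u @ [b, a] @ v @ [d, c] @ x @ [f, e] @ y) = labels (u @ [a, b] @ v @ [c, d] @ x @ [e, f] @ y)"
    unfolding labels_def by auto
  have w: "gauss_wf K \<longleftrightarrow> gauss_wf K'" unfolding K K' gauss_wf_iff l F3_fwf ..
  have "flat_step (flatten K) (flatten K')" if wf: "gauss_wf K"
  proof -
    have "\<forall>l\<in>{a, b, c, d, e, f}. s (fst l) = 1 \<or> s (fst l) = -1"
      using wf unfolding K gauss_wf_iff labels_def by auto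
    note F = R3_F3[OF R this]
    show ?thesis unfolding flat_step_def F3_move_def K K' flatten_eq
      apply (intro disjI2)
      apply (rule exI[of _ "map (fl s) u"], rule exI[of _ "map (fl s) v"], rule exI[of _ "map (fl s) x"],
             rule exI[of _ "map (fl s) y"], rule exI[of _ "fl s a"], rule exI[of _ "fl s b"],
             rule exI[of _ "fl s c"], rule exI[of _ "fl s d"], rule exI[of _ "fl s e"], rule exI[of _ "fl s f"])
      using F by simp
  qed
  then show ?thesis using w by simp
qed


lemma cc_props:
  assumes "cc_move K K'"
  shows "(gauss_wf K \<longleftrightarrow> gauss_wf K') \<and> (gauss_wf K \<longrightarrow> flat_step (flatten K) (flatten K') \<or> flatten K = flatten K')"
proof -
  let ?h = "\<lambda>c (d, ov). if d = c then (d, \<not> ov) else (d, ov)"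
  obtain w s c where K: "K = (w, s)" and c: "c \<in> labels w" and
      K': "K' = (map (?h c) w, s(c := - s c))"
    using assms unfolding cc_move_def by blast
  have hh: "?h c (?h c y) = y" for y by (cases y) auto
  have hi: "inj_on (?h c) A" for A by (rule inj_on_inverseI[where g = "?h c"]) (rule hh)
  have hf: "fst (?h c y) = fst y" for y by (cases y) auto
  have l: "labels (map (?h c) w) = labels w" unfolding labels_def by (simp add: image_image hf)
  have mem: "(z, bb) \<in> set (map (?h c) w) \<longleftrightarrow> (z, if z = c then \<not> bb else bb) \<in> set w" for z bb
  proof -
    have gen: "yy \<in> ?h c ` set w \<longleftrightarrow> ?h c yy \<in> set w" for yy
    proof
      assume "yy \<in> ?h c ` set w"
      then obtain x0 where "x0 \<in> set w" "yy = ?h c x0" by blast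
      then show "?h c yy \<in> set w" using hh[of x0] by simp
    next
      assume "?h c yy \<in> set w"
      then have "?h c (?h c yy) \<in> ?h c ` set w" by (rule imageI)
      then show "yy \<in> ?h c ` set w" using hh[of yy] by simp
    qed
    have "(z, bb) \<in> set (map (?h c) w) \<longleftrightarrow> ?h c (z, bb) \<in> set w"
      unfolding set_map by (rule gen)
    then show ?thesis by auto
  qed
  have ff: "fwf (map (?h c) w) \<longleftrightarrow> fwf w"
  proof -
    have "(z, True) \<in> set (map (?h c) w) \<and> (z, False) \<in> set (map (?h c) w) \<longleftrightarrow>
          (z, True) \<in> set w \<and> (z, False) \<in> set w" for z
      unfolding mem by auto
    then show ?thesis unfolding fwf_def l distinct_map using hi by auto
  qed
  have w: "gauss_wf K \<longleftrightarrow> gauss_wf K'"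
    unfolding K K' gauss_wf_iff ff l using c by auto
  have "flatten K' = flatten K" if wf: "gauss_wf K"
  proof -
    have sc: "s c = 1 \<or> s c = -1" using wf c unfolding K gauss_wf_iff by auto
    show ?thesis unfolding K K' flatten_eq map_map
    proof (rule map_cong[OF refl])
      fix yy assume "yy \<in> set w"
      obtain a bb where Y: "yy = (a, bb)" by (cases yy)
      show "(fl (s(c := - s c)) \<circ> ?h c) yy = fl s yy"
      proof (cases "a = c")
        case True
        then show ?thesis unfolding Y using sc by (cases bb) (auto simp: fl_def)
      next
        case False
        then show ?thesis unfolding Y by (simp add: fl_def)
      qed
    qed
  qed
  then show ?thesis using w by auto
qed



lemma gen_step_props:
  assumes "gen_step K K'"
  shows "(gauss_wf K \<longleftrightarrow> gauss_wf K') \<and> (gauss_wf K \<longrightarrow> flat_step (flatten K) (flatten K') \<or> flatten K = flatten K')"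
  using assms unfolding gen_step_def
  apply (elim disjE)
       apply (erule rot_props)
      apply (erule iso_props)
     apply (erule R1_props)
    apply (erule R2_props)
   apply (erule R3_props)
  apply (erule cc_props)
  done

lemma fwf_flatten: "gauss_wf K \<Longrightarrow> fwf (flatten K)"
  by (cases K) (simp add: gauss_wf_iff flatten_eq fwf_map_fl)

lemma frakF_flatten:
  assumes "gauss_wf K" "t \<noteq> 0"
  shows "frakF K t = Phi (flatten K) t"
  using assms frakF_Phi by (cases K) auto

lemma frakF_step:
  assumes w: "gauss_wf K" "gauss_wf K'" and t: "t \<noteq> 0"
    and st: "flat_step (flatten K) (flatten K') \<or> flat_step (flatten K') (flatten K) \<or> flatten K = flatten K'"
  shows "frakF K t = frakF K' t"
proof -
  have f1: "fwf (flatten K)" and f2: "fwf (flatten K')" using fwf_flatten w by auto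
  have "Phi (flatten K) t = Phi (flatten K') t"
    using st
  proof (elim disjE)
    assume "flat_step (flatten K) (flatten K')"
    from flat_step_inv[OF this, of t] f1 show ?thesis by simp
  next
    assume "flat_step (flatten K') (flatten K)"
    from flat_step_inv[OF this, of t] f2 show ?thesis by simp
  next
    assume "flatten K = flatten K'"
    then show ?thesis by simp
  qed
  then show ?thesis using frakF_flatten[OF w(1) t] frakF_flatten[OF w(2) t] by simp
qed

lemma part1:
  assumes "moves_cc_equiv K K'" "gauss_wf K"
  shows "gauss_wf K' \<and> (\<forall>t::real. t \<noteq> 0 \<longrightarrow> frakF K t = frakF K' t)"
  using assms unfolding moves_cc_equiv_def
proof (induction rule: rtranclp_induct)
  case base then show ?case by simp
next
  case (step y z)
  then have wy: "gauss_wf y" and py: "\<forall>t::real. t \<noteq> 0 \<longrightarrow> frakF K t = frakF y t" by auto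
  have "gauss_wf z \<and> (flat_step (flatten y) (flatten z) \<or> flat_step (flatten z) (flatten y) \<or> flatten y = flatten z)"
    using step(2)
  proof
    assume "gen_step y z"
    from gen_step_props[OF this] wy show ?thesis by blast
  next
    assume "gen_step z y"
    from gen_step_props[OF this] wy show ?thesis by auto
  qed
  then have wz: "gauss_wf z" and fz: "flat_step (flatten y) (flatten z) \<or> flat_step (flatten z) (flatten y) \<or> flatten y = flatten z" by auto
  have "\<forall>t::real. t \<noteq> 0 \<longrightarrow> frakF K t = frakF z t"
  proof (intro allI impI)
    fix t :: real assume t: "t \<noteq> 0"
    show "frakF K t = frakF z t" using frakF_step[OF wy wz t fz] py t by simp
  qed
  then show ?case using wz by simp
qed

theorem proposition3p3:
  fixes K K' :: gdiag
  assumes "gauss_wf K"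
  shows "(moves_cc_equiv K K' \<longrightarrow> (\<forall>t::real. t \<noteq> 0 \<longrightarrow> frakF K t = frakF K' t)) \<and>
         (gauss_wf K' \<and> flat_equiv (flatten K) (flatten K') \<longrightarrow>
            (\<forall>t::real. t \<noteq> 0 \<longrightarrow> frakF K t = frakF K' t))"
proof (intro conjI impI allI)
  fix t :: real
  assume "moves_cc_equiv K K'" "t \<noteq> 0"
  then show "frakF K t = frakF K' t" using part1[OF _ assms] by blast
next
  fix t :: real
  assume h: "gauss_wf K' \<and> flat_equiv (flatten K) (flatten K')" and t: "t \<noteq> 0"
  have "Phi (flatten K) t = Phi (flatten K') t"
    using flat_equiv_inv[of "flatten K" "flatten K'" t] h fwf_flatten[OF assms] by auto
  then show "frakF K t = frakF K' t"
    using frakF_flatten[OF assms t] frakF_flatten[of K' t] h t by simp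
qed


end
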